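(* Let $k\ge1$ with $2^k\le n+1$. Let $\mathbf{SB}_n^{2^k-1}$ be the set of all $f\in\mathbf{SB}_n$ with $\deg(f)\le 2^k-1$. Then $\mathbf{SB}_n^{2^k-1}$ equals the subring of $\mathbf{B}_n$ generated (together with the constants) by $\sigma_1,\sigma_2,\sigma_4,\dots,\sigma_{2^{k-1}}$, and the map $\tau:\mathbf{B}_k\to\mathbf{SB}_n^{2^k-1}$, $F(y_1,\dots,y_k)\mapsto F(\sigma_1,\sigma_2,\sigma_4,\dots,\sigma_{2^{k-1}})$ is a ring isomorphism.
   Context: $\mathbf{B}_n$ is the ring of Boolean functions $\mathbb{F}_2^n\to\mathbb{F}_2$ under pointwise addition and multiplication; $\mathbf{SB}_n$ is the subset of symmetric functions. $\sigma_i$ is the $i$-th elementary symmetric function of $x_1,\dots,x_n$ over $\mathbb{F}_2$. $\deg$ denotes algebraic degree (degree of the algebraic normal form). *)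

theory Defs
  imports "HOL-Combinatorics.Permutations" "HOL-Algebra.Algebra"
begin

(* F_2 is modelled by bool (addition = xor, i.e. (\<noteq>), multiplication = (\<and>)).
   A point x = (x_1,...,x_n) of F_2^n (coordinates indexed 0..n-1) is modelled by its
   support {i. x_i = 1}, a subset of {..<n}.
   A Boolean function F_2^n -> F_2 is a predicate on nat sets which is False outside
   Pow {..<n} (canonical representative, so that equality of functions is HOL equality). *)

definition BF :: "nat \<Rightarrow> (nat set \<Rightarrow> bool) set" where
  "BF n = {f. \<forall>x. \<not> x \<subseteq> {..<n} \<longrightarrow> \<not> f x}"

definition bf_mult :: "(nat set \<Rightarrow> bool) \<Rightarrow> (nat set \<Rightarrow> bool) \<Rightarrow> nat set \<Rightarrow> bool" where
  "bf_mult f g = (\<lambda>x. f x \<and> g x)"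

definition bf_add :: "(nat set \<Rightarrow> bool) \<Rightarrow> (nat set \<Rightarrow> bool) \<Rightarrow> nat set \<Rightarrow> bool" where
  "bf_add f g = (\<lambda>x. f x \<noteq> g x)"

definition bf_one :: "nat \<Rightarrow> nat set \<Rightarrow> bool" where
  "bf_one n = (\<lambda>x. x \<subseteq> {..<n})"

definition bf_zero :: "nat set \<Rightarrow> bool" where
  "bf_zero = (\<lambda>x. False)"

definition BF_ring :: "nat \<Rightarrow> (nat set \<Rightarrow> bool) ring" where
  "BF_ring n = \<lparr>carrier = BF n, monoid.mult = bf_mult, one = bf_one n, ring.zero = bf_zero, ring.add = bf_add\<rparr>"

definition symmetric_BF :: "nat \<Rightarrow> (nat set \<Rightarrow> bool) \<Rightarrow> bool" where
  "symmetric_BF n f \<longleftrightarrow>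
     (\<forall>\<pi>. \<pi> permutes {..<n} \<longrightarrow> (\<forall>x. x \<subseteq> {..<n} \<longrightarrow> f (\<pi> ` x) = f x))"

(* algebraic degree \<le> d: f has an algebraic normal form
     f(x) = XOR_{T} a_T \<prod>_{i\<in>T} x_i
   all of whose monomials have degree \<le> d.  (The monomial x_T is 1 at x iff T \<subseteq> x.) *)
definition deg_le :: "nat \<Rightarrow> (nat set \<Rightarrow> bool) \<Rightarrow> nat \<Rightarrow> bool" where
  "deg_le n f d \<longleftrightarrow>
     (\<exists>a :: nat set \<Rightarrow> bool.
        (\<forall>x. x \<subseteq> {..<n} \<longrightarrow> f x = odd (card {T. T \<subseteq> x \<and> a T})) \<and>
        (\<forall>T. T \<subseteq> {..<n} \<and> a T \<longrightarrow> card T \<le> d))"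

definition SB_deg :: "nat \<Rightarrow> nat \<Rightarrow> (nat set \<Rightarrow> bool) set" where
  "SB_deg n d = {f \<in> BF n. symmetric_BF n f \<and> deg_le n f d}"

definition SB_deg_ring :: "nat \<Rightarrow> nat \<Rightarrow> (nat set \<Rightarrow> bool) ring" where
  "SB_deg_ring n d = (BF_ring n) \<lparr> carrier := SB_deg n d \<rparr>"

definition esym :: "nat \<Rightarrow> nat \<Rightarrow> nat set \<Rightarrow> bool" where
  "esym n i x \<longleftrightarrow> x \<subseteq> {..<n} \<and> odd (card {T. T \<subseteq> x \<and> card T = i})"

(* tau : B_k -> B_n,  F(y_1..y_k) \<mapsto> F(sigma_1, sigma_2, sigma_4, ..., sigma_{2^(k-1)}) ;
   coordinate y_{j+1} (index j < k) is replaced by sigma_{2^j} *)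
definition tau :: "nat \<Rightarrow> nat \<Rightarrow> (nat set \<Rightarrow> bool) \<Rightarrow> (nat set \<Rightarrow> bool)" where
  "tau n k F = (\<lambda>x. x \<subseteq> {..<n} \<and> F {j. j < k \<and> esym n (2 ^ j) x})"

end

theory Submission
  imports Defs
begin


lemma binom2_aux: "(odd (2 * a choose (2 * c)) \<longleftrightarrow> odd (a choose c)) \<and> even (2 * a choose Suc (2 * c))"
proof (induction a arbitrary: c)
  case 0 then show ?case by (cases c) auto
next
  case (Suc a)
  have pas: "\<And>x i. (Suc (Suc x) choose Suc (Suc i)) = (x choose Suc (Suc i)) + 2  *  (x choose Suc i) + (x choose i)"
    by simp
  have e: "2  *  Suc a = Suc (Suc (2 * a))" by simp
  show ?case
  proof (cases c)
    case 0
    have "(Suc (Suc (2 * a)) choose Suc 0) = Suc (Suc (2 * a))" by simp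
    then show ?thesis using 0 by (simp add: e)
  next
    case (Suc c')
    have "2 * c = Suc (Suc (2 * c'))" using Suc by simp
    hence s1: "(2  *  Suc a choose 2 * c) = ((2 * a) choose (2 * c)) + 2  *  ((2 * a) choose Suc (2 * c')) + ((2 * a) choose (2 * c'))"
      using pas e Suc by simp
    have s2: "(2  *  Suc a choose Suc (2 * c)) = ((2 * a) choose Suc (2 * c)) + 2  *  ((2 * a) choose (2 * c)) + ((2 * a) choose Suc (2 * c'))"
      using pas e Suc by simp
    have "(Suc a choose c) = (a choose c) + (a choose c')" using Suc by simp
    then show ?thesis using s1 s2 Suc.IH[of c] Suc.IH[of c'] by auto
  qed
qed

lemma binom_parity: "odd (m choose i) \<longleftrightarrow> (odd i \<longrightarrow> odd m) \<and> odd ((m div 2) choose (i div 2))"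
proof -
  obtain a b where m: "m = 2 * a + b" "b < 2" by (metis mod_less_divisor div_mult_mod_eq mult.commute zero_less_numeral)
  obtain c d where i: "i = 2 * c + d" "d < 2" by (metis mod_less_divisor div_mult_mod_eq mult.commute zero_less_numeral)
  show ?thesis
  proof (cases "b = 0")
    case True
    show ?thesis
    proof (cases "d = 0")
      case True
      then show ?thesis using m i \<open>b=0\<close> binom2_aux[of a c] by auto
    next
      case False
      hence "i = Suc (2 * c)" using i by simp
      then show ?thesis using m \<open>b=0\<close> binom2_aux[of a c] by auto
    qed
  next
    case False
    hence b: "b = 1" using m by simp
    show ?thesis
    proof (cases "d = 0")
      case True
      show ?thesis
      proof (cases c)
        case 0 then show ?thesis using m i b True by simp
      next
        case (Suc c')
        have "(Suc (2 * a) choose (2 * c)) = ((2 * a) choose (2 * c)) + ((2 * a) choose Suc (2 * c'))"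
          using Suc by simp
        then show ?thesis using m i b True binom2_aux[of a c] binom2_aux[of a c'] by auto
      qed
    next
      case False
      hence "d = 1" using i by simp
      have "(Suc (2 * a) choose Suc (2 * c)) = ((2 * a) choose (2 * c)) + ((2 * a) choose Suc (2 * c))"
        by simp
      then show ?thesis using m i b \<open>d=1\<close> binom2_aux[of a c] by auto
    qed
  qed
qed

lemma lucas: "odd (m choose i) \<longleftrightarrow> (\<forall>j. bit i j \<longrightarrow> bit m j)"
proof (induction m arbitrary: i rule: less_induct)
  case (less m)
  show ?case
  proof (cases "m = 0")
    case True
    have "(\<forall>j. \<not> bit i j) \<longleftrightarrow> i = 0" by (auto simp: bit_eq_iff)
    moreover have "odd (0 choose i) \<longleftrightarrow> i = 0" by (cases i) simp_all
    ultimately show ?thesis using True by simp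
  next
    case False
    have IH: "odd ((m div 2) choose (i div 2)) \<longleftrightarrow> (\<forall>j. bit (i div 2) j \<longrightarrow> bit (m div 2) j)"
      using less False by simp
    have "(\<forall>j. bit i j \<longrightarrow> bit m j) \<longleftrightarrow> (odd i \<longrightarrow> odd m) \<and> (\<forall>j. bit (i div 2) j \<longrightarrow> bit (m div 2) j)"
      by (metis bit_0 bit_Suc not0_implies_Suc)
    then show ?thesis using IH binom_parity[of m i] by simp
  qed
qed



lemma par_sum: "finite A \<Longrightarrow> odd (\<Sum>a\<in>A. (g a :: nat)) \<longleftrightarrow> odd (card {a\<in>A. odd (g a)})"
proof (induction A rule: finite_induct)
  case empty then show ?case by simp
next
  case (insert x A)
  have "{a\<in>insert x A. odd (g a)} = (if odd (g x) then insert x {a\<in>A. odd (g a)} else {a\<in>A. odd (g a)})"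
    by auto
  then show ?case using insert by auto
qed

lemma card_between: assumes "finite x" "y \<subseteq> x"
  shows "card {T. T \<subseteq> x \<and> y \<subseteq> T} = 2 ^ card (x - y)"
proof -
  have "{T. T \<subseteq> x \<and> y \<subseteq> T} = (\<lambda>U. U \<union> y) ` Pow (x - y)"
  proof (intro equalityI subsetI)
    fix T assume "T \<in> {T. T \<subseteq> x \<and> y \<subseteq> T}"
    then show "T \<in> (\<lambda>U. U \<union> y) ` Pow (x - y)" by (intro image_eqI[of _ _ "T - y"]) auto
  qed (use assms in auto)
  moreover have "inj_on (\<lambda>U. U \<union> y) (Pow (x - y))" by (auto simp: inj_on_def)
  ultimately show ?thesis using assms by (simp add: card_image card_Pow)
qed

lemma mob: assumes "finite x"
  shows "odd (card {T. T \<subseteq> x \<and> odd (card {y. y \<subseteq> T \<and> g y})}) \<longleftrightarrow> g x"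
proof -
  have fin: "\<And>T. T \<subseteq> x \<Longrightarrow> finite T" using assms finite_subset by blast
  have "odd (card {T. T \<subseteq> x \<and> odd (card {y. y \<subseteq> T \<and> g y})})
     \<longleftrightarrow> odd (\<Sum>T\<in>Pow x. card {y. y \<subseteq> T \<and> g y})"
    using par_sum[of "Pow x" "\<lambda>T. card {y. y \<subseteq> T \<and> g y}"] assms by (simp add: Pow_def)
  also have "(\<Sum>T\<in>Pow x. card {y. y \<subseteq> T \<and> g y}) = (\<Sum>T\<in>Pow x. \<Sum>y\<in>{y\<in>Pow x. y \<subseteq> T}. (if g y then 1 else 0))"
  proof (rule sum.cong[OF refl])
    fix T assume T: "T \<in> Pow x"
    have "{y\<in>Pow x. y \<subseteq> T} = Pow T" using T by auto
    moreover have "card {y. y \<subseteq> T \<and> g y} = (\<Sum>y\<in>Pow T. (if g y then 1 else 0))"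
      using fin[of T] T by (simp add: sum.If_cases Pow_def Collect_conj_eq)
    ultimately show "card {y. y \<subseteq> T \<and> g y} = (\<Sum>y\<in>{y\<in>Pow x. y \<subseteq> T}. (if g y then 1 else 0))" by simp
  qed
  also have "\<dots> = (\<Sum>y\<in>Pow x. \<Sum>T\<in>{T\<in>Pow x. y \<subseteq> T}. (if g y then 1 else 0))"
    using assms by (intro sum.swap_restrict) auto
  also have "\<dots> = (\<Sum>y\<in>Pow x. (if g y then 2 ^ card (x - y) else 0))"
  proof (rule sum.cong[OF refl])
    fix y assume "y \<in> Pow x"
    then have "card {T\<in>Pow x. y \<subseteq> T} = 2 ^ card (x - y)"
      using card_between[OF assms, of y] by (simp add: Pow_def)
    then show "(\<Sum>T\<in>{T\<in>Pow x. y \<subseteq> T}. (if g y then 1 else 0)) = (if g y then 2 ^ card (x - y) else 0::nat)"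
      by simp
  qed
  finally have "odd (card {T. T \<subseteq> x \<and> odd (card {y. y \<subseteq> T \<and> g y})})
     \<longleftrightarrow> odd (card {y\<in>Pow x. odd (if g y then 2 ^ card (x - y) else 0::nat)})"
    using par_sum[of "Pow x" "\<lambda>y. if g y then 2 ^ card (x - y) else 0::nat"] assms by simp
  also have "{y\<in>Pow x. odd (if g y then 2 ^ card (x - y) else 0::nat)} = (if g x then {x} else {})"
  proof -
    have "\<And>y. y \<subseteq> x \<Longrightarrow> card (x - y) = 0 \<longleftrightarrow> y = x"
      using assms by (metis Diff_eq_empty_iff card_0_eq finite_Diff subset_antisym)
    then show ?thesis by auto
  qed
  finally show ?thesis by simp
qed

lemma cnt: assumes "finite x"
  shows "card {T. T \<subseteq> x \<and> P (card T)} = (\<Sum>i\<in>{i. i \<le> card x \<and> P i}. card x choose i)"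
proof -
  have "{T. T \<subseteq> x \<and> P (card T)} = (\<Union>i\<in>{i. i \<le> card x \<and> P i}. {T. T \<subseteq> x \<and> card T = i})"
    using assms by (auto intro: card_mono)
  moreover have "card (\<Union>i\<in>{i. i \<le> card x \<and> P i}. {T. T \<subseteq> x \<and> card T = i})
     = (\<Sum>i\<in>{i. i \<le> card x \<and> P i}. card {T. T \<subseteq> x \<and> card T = i})"
    using assms by (intro card_UN_disjoint) (auto intro: finite_subset)
  ultimately show ?thesis using assms by (simp add: n_subsets)
qed



definition Bk :: "nat \<Rightarrow> nat \<Rightarrow> nat set" where "Bk k m = {j. j < k \<and> bit m j}"

lemma esym_eq: "esym n i x \<longleftrightarrow> x \<subseteq> {..<n} \<and> odd (card x choose i)"
proof -
  have "x \<subseteq> {..<n} \<Longrightarrow> finite x" using finite_subset by blast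
  then show ?thesis unfolding esym_def using n_subsets[of x i] by auto
qed

lemma esym2_eq: "esym n (2 ^ j) x \<longleftrightarrow> x \<subseteq> {..<n} \<and> bit (card x) j"
  unfolding esym_eq lucas by (auto simp: bit_exp_iff)

lemma tau_eq: "tau n k F x = (x \<subseteq> {..<n} \<and> F (Bk k (card x)))"
proof (cases "x \<subseteq> {..<n}")
  case True
  then have "{j. j < k \<and> esym n (2 ^ j) x} = Bk k (card x)" by (auto simp: Bk_def esym2_eq)
  then show ?thesis using True by (simp add: tau_def)
qed (simp add: tau_def)

lemma bit_lt: "i < 2 ^ k \<Longrightarrow> bit (i::nat) j \<Longrightarrow> j < k"
proof (rule ccontr)
  assume a: "i < 2 ^ k" "bit i j" "\<not> j < k"
  then have "i < 2 ^ j" by (meson le_less_trans not_less power_increasing_iff one_less_numeral_iff semiring_norm(76) less_le_not_le)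
  then show False using a(2) by (simp add: bit_iff_odd)
qed

lemma lucasB: "i < 2 ^ k \<Longrightarrow> odd (m choose i) \<longleftrightarrow> Bk k i \<subseteq> Bk k m"
  unfolding lucas Bk_def using bit_lt by blast

lemma Bk_sub: "Bk k m \<subseteq> {..<k}" by (auto simp: Bk_def)

lemma Bk_inj: "inj_on (Bk k) {..<2 ^ k}"
proof (rule inj_onI)
  fix m m' :: nat assume m: "m \<in> {..<2 ^ k}" "m' \<in> {..<2 ^ k}" "Bk k m = Bk k m'"
  have "bit m j = bit m' j" for j
  proof (cases "j < k")
    case True
    then show ?thesis using m(3) unfolding Bk_def by blast
  next
    case False
    then show ?thesis using m(1,2) bit_lt by auto
  qed
  then show "m = m'" by (simp add: bit_eq_iff)
qed

lemma Bk_img: "Bk k ` {..<2 ^ k} = Pow {..<k}"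
proof (rule card_subset_eq)
  show "Bk k ` {..<2 ^ k} \<subseteq> Pow {..<k}" using Bk_sub by auto
  show "card (Bk k ` {..<2 ^ k}) = card (Pow {..<k})"
    using Bk_inj by (simp add: card_image card_Pow)
qed simp

lemma nfid: assumes "finite x"
  shows "odd (card {T. T \<subseteq> x \<and> card T < 2 ^ k \<and> c (card T)})
     \<longleftrightarrow> odd (card {i. i < 2 ^ k \<and> c i \<and> Bk k i \<subseteq> Bk k (card x)})"
proof -
  have "odd (card {T. T \<subseteq> x \<and> card T < 2 ^ k \<and> c (card T)})
     \<longleftrightarrow> odd (\<Sum>i\<in>{i. i \<le> card x \<and> i < 2 ^ k \<and> c i}. card x choose i)"
    using cnt[OF assms, of "\<lambda>i. i < 2 ^ k \<and> c i"] by simp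
  also have "\<dots> \<longleftrightarrow> odd (card {i\<in>{i. i \<le> card x \<and> i < 2 ^ k \<and> c i}. odd (card x choose i)})"
    by (rule par_sum) simp
  also have "{i\<in>{i. i \<le> card x \<and> i < 2 ^ k \<and> c i}. odd (card x choose i)}
     = {i. i < 2 ^ k \<and> c i \<and> Bk k i \<subseteq> Bk k (card x)}"
  proof -
    have "\<And>i. odd (card x choose i) \<Longrightarrow> i \<le> card x" by (metis binomial_eq_0 not_less odd_pos less_numeral_extra(3))
    then show ?thesis using lucasB by blast
  qed
  finally show ?thesis .
qed

definition Fc :: "nat \<Rightarrow> (nat \<Rightarrow> bool) \<Rightarrow> nat set \<Rightarrow> bool" where
  "Fc k c = (\<lambda>S. S \<subseteq> {..<k} \<and> odd (card {i. i < 2 ^ k \<and> c i \<and> Bk k i \<subseteq> S}))"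

lemma Fc_BF: "Fc k c \<in> BF k" by (auto simp: Fc_def BF_def)

lemma BF_Fc: assumes "F \<in> BF k" shows "\<exists>c. F = Fc k c"
proof -
  define b where "b R = odd (card {y. y \<subseteq> R \<and> F y})" for R
  define c where "c i = b (Bk k i)" for i
  have "F S = Fc k c S" for S
  proof (cases "S \<subseteq> {..<k}")
    case True
    have fS: "finite S" using True finite_subset by blast
    have "F S \<longleftrightarrow> odd (card {R. R \<subseteq> S \<and> b R})" using mob[OF fS, of F] by (simp add: b_def)
    also have "{R. R \<subseteq> S \<and> b R} = Bk k ` {i. i < 2 ^ k \<and> c i \<and> Bk k i \<subseteq> S}"
    proof (intro equalityI subsetI)
      fix R assume R: "R \<in> {R. R \<subseteq> S \<and> b R}"
      then have "R \<in> Bk k ` {..<2 ^ k}" using True Bk_img by auto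
      then obtain i where "i < 2 ^ k" "R = Bk k i" by auto
      then show "R \<in> Bk k ` {i. i < 2 ^ k \<and> c i \<and> Bk k i \<subseteq> S}" using R by (auto simp: c_def)
    qed (auto simp: c_def)
    also have "card \<dots> = card {i. i < 2 ^ k \<and> c i \<and> Bk k i \<subseteq> S}"
      by (rule card_image, rule inj_on_subset[OF Bk_inj]) auto
    finally show ?thesis using True by (simp add: Fc_def)
  next
    case False
    then show ?thesis using assms by (simp add: Fc_def BF_def)
  qed
  then show ?thesis by blast
qed

lemma tau_Fc: "tau n k (Fc k c) x = (x \<subseteq> {..<n} \<and> odd (card {i. i < 2 ^ k \<and> c i \<and> Bk k i \<subseteq> Bk k (card x)}))"
  by (simp add: tau_eq Fc_def Bk_sub)

lemma tau_sym: "symmetric_BF n (tau n k F)"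
  unfolding symmetric_BF_def
proof (intro allI impI)
  fix \<pi> x assume p: "\<pi> permutes {..<n}" "x \<subseteq> {..<n}"
  have "card (\<pi> ` x) = card x" using p(1) by (meson card_image inj_on_subset permutes_inj subset_UNIV)
  moreover have "\<pi> ` x \<subseteq> {..<n}" using p by (metis image_mono permutes_image)
  ultimately show "tau n k F (\<pi> ` x) = tau n k F x" using p by (simp add: tau_eq)
qed

lemma tau_BF: "tau n k F \<in> BF n" by (auto simp: BF_def tau_def)

lemma tau_SB: "tau n k (Fc k c) \<in> SB_deg n (2 ^ k - 1)"
proof -
  have "deg_le n (tau n k (Fc k c)) (2 ^ k - 1)"
    unfolding deg_le_def
  proof (intro exI[of _ "\<lambda>T. card T < 2 ^ k \<and> c (card T)"] conjI allI impI)
    fix x assume x: "x \<subseteq> {..<n}"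
    then have "finite x" using finite_subset by blast
    then show "tau n k (Fc k c) x = odd (card {T. T \<subseteq> x \<and> card T < 2 ^ k \<and> c (card T)})"
      using x nfid[OF \<open>finite x\<close>, of k c] by (simp add: tau_Fc)
  qed auto
  then show ?thesis using tau_sym tau_BF by (simp add: SB_deg_def)
qed



lemma perm_exists: assumes "A \<subseteq> {..<n}"
  shows "\<exists>\<pi>. \<pi> permutes {..<n} \<and> \<pi> ` A = {..<card A}"
proof -
  have fA: "finite A" using assms finite_subset by blast
  have cA: "card A \<le> n" using assms by (metis card_lessThan card_mono finite_lessThan)
  obtain g where g: "bij_betw g A {..<card A}"
    using fA by (metis card_lessThan finite_lessThan finite_same_card_bij)
  have "card ({..<n} - A) = card ({..<n} - {..<card A})"
    using assms cA fA by (simp add: card_Diff_subset)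
  then obtain h where h: "bij_betw h ({..<n} - A) ({..<n} - {..<card A})"
    by (metis finite_Diff finite_lessThan finite_same_card_bij)
  define p where "p x = (if x \<in> A then g x else if x \<in> {..<n} then h x else x)" for x
  have "bij_betw p A {..<card A}" using g by (rule bij_betw_cong[THEN iffD1, rotated]) (simp add: p_def)
  moreover have "bij_betw p ({..<n} - A) ({..<n} - {..<card A})"
    using h by (rule bij_betw_cong[THEN iffD1, rotated]) (simp add: p_def)
  ultimately have "bij_betw p (A \<union> ({..<n} - A)) ({..<card A} \<union> ({..<n} - {..<card A}))"
    by (rule bij_betw_combine) auto
  moreover have "A \<union> ({..<n} - A) = {..<n}" using assms by auto
  moreover have "{..<card A} \<union> ({..<n} - {..<card A}) = {..<n}" using cA by auto
  ultimately have "bij_betw p {..<n} {..<n}" by simp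
  then have "p permutes {..<n}" by (rule bij_imp_permutes) (use assms in \<open>auto simp: p_def\<close>)
  moreover have "p ` A = {..<card A}" using g by (simp add: bij_betw_def p_def)
  ultimately show ?thesis by blast
qed

lemma SB_surj: assumes f: "f \<in> SB_deg n (2 ^ k - 1)" shows "\<exists>c. f = tau n k (Fc k c)"
proof -
  have fBF: "f \<in> BF n" and sym: "symmetric_BF n f" and dg: "deg_le n f (2 ^ k - 1)"
    using f by (auto simp: SB_deg_def)
  obtain a where a1: "\<And>x. x \<subseteq> {..<n} \<Longrightarrow> f x = odd (card {T. T \<subseteq> x \<and> a T})"
    and a2: "\<And>T. T \<subseteq> {..<n} \<Longrightarrow> a T \<Longrightarrow> card T \<le> 2 ^ k - 1"
    using dg unfolding deg_le_def by blast
  have fsym: "f y = f {..<card y}" if yn: "y \<subseteq> {..<n}" for y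
  proof -
    obtain p where "p permutes {..<n}" "p ` y = {..<card y}" using perm_exists[OF yn] by blast
    then show ?thesis using sym yn unfolding symmetric_BF_def by metis
  qed
  have aT: "a T = odd (\<Sum>i\<in>{i. i \<le> card T \<and> f {..<i}}. card T choose i)" if T: "T \<subseteq> {..<n}" for T
  proof -
    have fT: "finite T" using T finite_subset by blast
    have "a T = odd (card {S. S \<subseteq> T \<and> odd (card {y. y \<subseteq> S \<and> a y})})" using mob[OF fT, of a] by simp
    also have "{S. S \<subseteq> T \<and> odd (card {y. y \<subseteq> S \<and> a y})} = {S. S \<subseteq> T \<and> f {..<card S}}"
      using a1 fsym T by (metis (no_types, lifting) order_trans)
    also have "card \<dots> = (\<Sum>i\<in>{i. i \<le> card T \<and> f {..<i}}. card T choose i)" by (rule cnt[OF fT])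
    finally show ?thesis .
  qed
  define c where "c i = a {..<i}" for i
  have ac: "a T = c (card T)" if "T \<subseteq> {..<n}" for T
  proof -
    have "card T \<le> n" using that by (metis card_lessThan card_mono finite_lessThan)
    then show ?thesis using aT[OF that] aT[of "{..<card T}"] by (simp add: c_def)
  qed
  have "f x = tau n k (Fc k c) x" for x
  proof (cases "x \<subseteq> {..<n}")
    case True
    then have fx: "finite x" using finite_subset by blast
    have "{T. T \<subseteq> x \<and> a T} = {T. T \<subseteq> x \<and> card T < 2 ^ k \<and> c (card T)}"
    proof -
      have "T \<subseteq> x \<Longrightarrow> a T \<longleftrightarrow> card T < 2 ^ k \<and> c (card T)" for T
      proof -
        assume Tx: "T \<subseteq> x"
        then have T: "T \<subseteq> {..<n}" using True by blast
        have "c (card T) \<Longrightarrow> card T < 2 ^ k" using a2[OF T] ac[OF T]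
          by (metis One_nat_def Suc_pred le_imp_less_Suc pos2 zero_less_power)
        then show ?thesis using ac[OF T] by blast
      qed
      then show ?thesis by blast
    qed
    then show ?thesis using a1[OF True] nfid[OF fx, of k c] True by (simp add: tau_Fc)
  next
    case False
    then show ?thesis using fBF by (simp add: BF_def tau_Fc)
  qed
  then show ?thesis by blast
qed

lemma tau_inj: assumes "2 ^ k \<le> n + 1" shows "inj_on (tau n k) (BF k)"
proof (rule inj_onI)
  fix F G assume F: "F \<in> BF k" and G: "G \<in> BF k" and e: "tau n k F = tau n k G"
  have "F S = G S" for S
  proof (cases "S \<subseteq> {..<k}")
    case True
    then obtain m where m: "m < 2 ^ k" "S = Bk k m" using Bk_img by (metis PowI imageE lessThan_iff)
    have "{..<m} \<subseteq> {..<n}" using m assms by auto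
    then show ?thesis using fun_cong[OF e, of "{..<m}"] m by (simp add: tau_eq)
  next
    case False
    then show ?thesis using F G by (simp add: BF_def)
  qed
  then show "F = G" by blast
qed

lemma tau_img: "tau n k ` BF k = SB_deg n (2 ^ k - 1)"
proof
  show "tau n k ` BF k \<subseteq> SB_deg n (2 ^ k - 1)" using BF_Fc tau_SB by blast
  show "SB_deg n (2 ^ k - 1) \<subseteq> tau n k ` BF k" using SB_surj Fc_BF by blast
qed



lemma BF_ring_simps: "carrier (BF_ring n) = BF n" "monoid.mult (BF_ring n) = bf_mult" "monoid.one (BF_ring n) = bf_one n"
  "ring.zero (BF_ring n) = bf_zero" "ring.add (BF_ring n) = bf_add"
  by (simp_all add: BF_ring_def)

lemma SB_ring_simps: "carrier (SB_deg_ring n d) = SB_deg n d" "monoid.mult (SB_deg_ring n d) = bf_mult"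
  "monoid.one (SB_deg_ring n d) = bf_one n" "ring.add (SB_deg_ring n d) = bf_add"
  by (simp_all add: SB_deg_ring_def BF_ring_def)

lemma t1: "a_inv (BF_ring n) h = (THE y. y \<in> BF n \<and> bf_add h y = bf_zero \<and> bf_add y h = bf_zero)"
  unfolding a_inv_def m_inv_def by (simp only: partial_object.simps monoid.simps BF_ring_simps)

lemma ainv_BF: assumes "h \<in> BF n" shows "a_inv (BF_ring n) h = h"
  unfolding t1
proof (rule the_equality)
  show "h \<in> BF n \<and> bf_add h h = bf_zero \<and> bf_add h h = bf_zero" using assms by (simp add: bf_add_def bf_zero_def)
  fix y assume "y \<in> BF n \<and> bf_add h y = bf_zero \<and> bf_add y h = bf_zero"
  then have "bf_add h y = bf_zero" by blast
  show "y = h"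
  proof (rule ext)
    fix x
    have "bf_add h y x = bf_zero x" using \<open>bf_add h y = bf_zero\<close> by (rule fun_cong)
    then show "y x = h x" unfolding bf_add_def bf_zero_def by blast
  qed
qed

abbreviation "Gen n k \<equiv> generate_ring (BF_ring n) ((\<lambda>j. esym n (2 ^ j)) ` {..<k})"

lemma mon_gen: "finite R \<Longrightarrow> R \<subseteq> {..<k} \<Longrightarrow> (\<lambda>x. x \<subseteq> {..<n} \<and> R \<subseteq> Bk k (card x)) \<in> Gen n k"
proof (induction R rule: finite_induct)
  case empty
  have e: "(\<lambda>x. x \<subseteq> {..<n} \<and> {} \<subseteq> Bk k (card x)) = monoid.one (BF_ring n)" by (simp add: BF_ring_simps bf_one_def)
  show ?case unfolding e by (rule generate_ring.one)
next
  case (insert j R)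
  have e: "(\<lambda>x. x \<subseteq> {..<n} \<and> insert j R \<subseteq> Bk k (card x))
     = monoid.mult (BF_ring n) (esym n (2 ^ j)) (\<lambda>x. x \<subseteq> {..<n} \<and> R \<subseteq> Bk k (card x))"
  proof (rule ext)
    fix x :: "nat set"
    have jk: "j < k" using insert.prems by simp
    have "insert j R \<subseteq> Bk k (card x) \<longleftrightarrow> bit (card x) j \<and> R \<subseteq> Bk k (card x)"
      using jk by (simp add: Bk_def)
    then show "(x \<subseteq> {..<n} \<and> insert j R \<subseteq> Bk k (card x)) =
      monoid.mult (BF_ring n) (esym n (2 ^ j)) (\<lambda>x. x \<subseteq> {..<n} \<and> R \<subseteq> Bk k (card x)) x"
      unfolding BF_ring_simps bf_mult_def esym2_eq by (cases "x \<subseteq> {..<n}") simp_all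
  qed
  have g: "esym n (2 ^ j) \<in> Gen n k" using insert.prems by (intro generate_ring.incl) simp
  have ih: "(\<lambda>x. x \<subseteq> {..<n} \<and> R \<subseteq> Bk k (card x)) \<in> Gen n k" using insert.prems by (intro insert.IH) simp
  show ?case unfolding e by (rule generate_ring.eng_mult[OF g ih])
qed

lemma zero_gen: "bf_zero \<in> Gen n k"
proof -
  have "bf_one n \<in> BF n" by (simp add: BF_def bf_one_def)
  then have "a_inv (BF_ring n) (monoid.one (BF_ring n)) = bf_one n" unfolding BF_ring_simps by (rule ainv_BF)
  then have e: "ring.add (BF_ring n) (monoid.one (BF_ring n)) (a_inv (BF_ring n) (monoid.one (BF_ring n))) = bf_zero"
    by (simp add: BF_ring_simps bf_add_def bf_zero_def)
  show ?thesis unfolding e[symmetric]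
    by (rule generate_ring.eng_add[OF generate_ring.one generate_ring.a_inv[OF generate_ring.one]])
qed

lemma sum_gen: "finite (I::nat set) \<Longrightarrow> I \<subseteq> {..<(2::nat) ^ k} \<Longrightarrow>
   (\<lambda>x::nat set. x \<subseteq> {..<(n::nat)} \<and> odd (card {i\<in>I. Bk k i \<subseteq> Bk k (card x)})) \<in> Gen n k"
proof (induction I rule: finite_induct)
  case empty
  have "(\<lambda>x. x \<subseteq> {..<n} \<and> odd (card {i\<in>{}. Bk k i \<subseteq> Bk k (card x)})) = bf_zero"
    by (simp add: bf_zero_def)
  then show ?case using zero_gen by simp
next
  case (insert i I)
  have m: "(\<lambda>x. x \<subseteq> {..<n} \<and> Bk k i \<subseteq> Bk k (card x)) \<in> Gen n k"
    by (rule mon_gen) (auto simp: Bk_def)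
  have "(\<lambda>x. x \<subseteq> {..<n} \<and> odd (card {i'\<in>insert i I. Bk k i' \<subseteq> Bk k (card x)}))
     = ring.add (BF_ring n) (\<lambda>x. x \<subseteq> {..<n} \<and> Bk k i \<subseteq> Bk k (card x))
         (\<lambda>x. x \<subseteq> {..<n} \<and> odd (card {i\<in>I. Bk k i \<subseteq> Bk k (card x)}))"
  proof (rule ext)
    fix x :: "nat set"
    have "{i'\<in>insert i I. Bk k i' \<subseteq> Bk k (card x)} =
      (if Bk k i \<subseteq> Bk k (card x) then insert i {i\<in>I. Bk k i \<subseteq> Bk k (card x)} else {i\<in>I. Bk k i \<subseteq> Bk k (card x)})"
      by auto
    moreover have "finite {i\<in>I. Bk k i \<subseteq> Bk k (card x)}" using insert(1) by simp
    moreover have "i \<notin> {i\<in>I. Bk k i \<subseteq> Bk k (card x)}" using insert(2) by simp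
    ultimately show "(x \<subseteq> {..<n} \<and> odd (card {i'\<in>insert i I. Bk k i' \<subseteq> Bk k (card x)})) =
      ring.add (BF_ring n) (\<lambda>x. x \<subseteq> {..<n} \<and> Bk k i \<subseteq> Bk k (card x))
         (\<lambda>x. x \<subseteq> {..<n} \<and> odd (card {i\<in>I. Bk k i \<subseteq> Bk k (card x)})) x"
      unfolding BF_ring_simps bf_add_def by (cases "Bk k i \<subseteq> Bk k (card x)"; cases "x \<subseteq> {..<n}") simp_all
  qed
  moreover have "(\<lambda>x::nat set. x \<subseteq> {..<n} \<and> odd (card {i\<in>I. Bk k i \<subseteq> Bk k (card x)})) \<in> Gen n k"
    using insert by simp
  ultimately show ?case using generate_ring.eng_add[OF m] by simp
qed

lemma tau_gen: "tau n k (Fc k c) \<in> Gen n k"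
proof -
  have e: "tau n k (Fc k c) = (\<lambda>x. x \<subseteq> {..<n} \<and> odd (card {i\<in>{i. i < 2 ^ k \<and> c i}. Bk k i \<subseteq> Bk k (card x)}))"
    by (rule ext) (simp add: tau_Fc conj_assoc)
  show ?thesis unfolding e by (rule sum_gen) auto
qed

lemma tau_add: "tau n k (bf_add F G) = bf_add (tau n k F) (tau n k G)"
  by (auto simp: tau_def bf_add_def fun_eq_iff)
lemma tau_mult: "tau n k (bf_mult F G) = bf_mult (tau n k F) (tau n k G)"
  by (auto simp: tau_def bf_mult_def fun_eq_iff)
lemma tau_one: "tau n k (bf_one k) = bf_one n"
  by (auto simp: tau_eq bf_one_def fun_eq_iff Bk_sub)
lemma BF_add: "F \<in> BF k \<Longrightarrow> G \<in> BF k \<Longrightarrow> bf_add F G \<in> BF k" by (auto simp: BF_def bf_add_def)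
lemma BF_mult: "F \<in> BF k \<Longrightarrow> G \<in> BF k \<Longrightarrow> bf_mult F G \<in> BF k" by (auto simp: BF_def bf_mult_def)
lemma BF_one: "bf_one k \<in> BF k" by (auto simp: BF_def bf_one_def)

lemma gen_sub: "h \<in> Gen n k \<Longrightarrow> h \<in> tau n k ` BF k"
proof (induction rule: generate_ring.induct)
  case one
  show ?case unfolding BF_ring_simps(3) tau_one[of n k, symmetric] using BF_one[of k] by (rule imageI)
next
  case (incl h)
  then obtain j where j: "j < k" "h = esym n (2 ^ j)" by auto
  have eq: "h = tau n k (\<lambda>S. S \<subseteq> {..<k} \<and> j \<in> S)"
    unfolding j(2) by (intro ext) (simp add: tau_eq esym2_eq Bk_sub, simp add: Bk_def j(1))
  have "(\<lambda>S. S \<subseteq> {..<k} \<and> j \<in> S) \<in> BF k" by (simp add: BF_def)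
  then show ?case unfolding eq by (rule imageI)
next
  case (a_inv h)
  then obtain F where F: "F \<in> BF k" "h = tau n k F" by blast
  then have "h \<in> BF n" using tau_BF by (simp only:)
  then have "a_inv (BF_ring n) h = h" by (rule ainv_BF)
  then show ?case using a_inv.IH by (simp only:)
next
  case (eng_add h1 h2)
  then obtain F G where F: "F \<in> BF k" "h1 = tau n k F" and G: "G \<in> BF k" "h2 = tau n k G" by blast
  then have eq: "ring.add (BF_ring n) h1 h2 = tau n k (bf_add F G)" by (simp add: BF_ring_simps tau_add)
  have "bf_add F G \<in> BF k" using F(1) G(1) by (rule BF_add)
  then show ?case unfolding eq by (rule imageI)
next
  case (eng_mult h1 h2)
  then obtain F G where F: "F \<in> BF k" "h1 = tau n k F" and G: "G \<in> BF k" "h2 = tau n k G" by blast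
  then have eq: "monoid.mult (BF_ring n) h1 h2 = tau n k (bf_mult F G)" by (simp add: BF_ring_simps tau_mult)
  have "bf_mult F G \<in> BF k" using F(1) G(1) by (rule BF_mult)
  then show ?case unfolding eq by (rule imageI)
qed

theorem theorem2:
  fixes n k :: nat
  assumes "k \<ge> 1" and "2 ^ k \<le> n + 1"
  shows "SB_deg n (2 ^ k - 1) = generate_ring (BF_ring n) ((\<lambda>j. esym n (2 ^ j)) ` {..<k})
         \<and> tau n k \<in> ring_iso (BF_ring k) (SB_deg_ring n (2 ^ k - 1))"
proof
  have "Gen n k = tau n k ` BF k"
  proof
    show "Gen n k \<subseteq> tau n k ` BF k" using gen_sub by blast
    show "tau n k ` BF k \<subseteq> Gen n k"
    proof
      fix h assume "h \<in> tau n k ` BF k"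
      then obtain F where F: "F \<in> BF k" "h = tau n k F" by blast
      obtain c where "F = Fc k c" using BF_Fc[OF F(1)] by blast
      then show "h \<in> Gen n k" using F(2) tau_gen by simp
    qed
  qed
  then show "SB_deg n (2 ^ k - 1) = Gen n k" using tau_img by simp
  have hom: "tau n k \<in> ring_hom (BF_ring k) (SB_deg_ring n (2 ^ k - 1))"
  proof (rule ring_hom_memI)
    fix F assume "F \<in> carrier (BF_ring k)"
    then have "F \<in> BF k" unfolding BF_ring_simps .
    then have "tau n k F \<in> tau n k ` BF k" by (rule imageI)
    then show "tau n k F \<in> carrier (SB_deg_ring n (2 ^ k - 1))"
      unfolding SB_ring_simps tau_img .
  next
    fix F G
    show "tau n k (monoid.mult (BF_ring k) F G) = monoid.mult (SB_deg_ring n (2 ^ k - 1)) (tau n k F) (tau n k G)"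
      by (simp only: BF_ring_simps SB_ring_simps tau_mult)
    show "tau n k (ring.add (BF_ring k) F G) = ring.add (SB_deg_ring n (2 ^ k - 1)) (tau n k F) (tau n k G)"
      by (simp only: BF_ring_simps SB_ring_simps tau_add)
  next
    show "tau n k (monoid.one (BF_ring k)) = monoid.one (SB_deg_ring n (2 ^ k - 1))"
      by (simp only: BF_ring_simps SB_ring_simps tau_one)
  qed
  have bij: "bij_betw (tau n k) (BF k) (SB_deg n (2 ^ k - 1))"
    unfolding bij_betw_def using tau_inj[OF assms(2)] tau_img by (rule conjI)
  show "tau n k \<in> ring_iso (BF_ring k) (SB_deg_ring n (2 ^ k - 1))"
    unfolding ring_iso_def mem_Collect_eq BF_ring_simps(1) SB_ring_simps(1) using hom bij by (rule conjI)
qed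

end
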